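(* Let $E$ be an $r$-round block cipher with block size $n$, and let $F:\mathbb{F}_2^n\times\mathbb{F}_2^m\to\mathbb{F}_2^n$, $F(x,k)=F_k(x)$, be its reduced version consisting of the first $r-1$ rounds, where $k$ ranges over the key space $\mathcal{K}=\mathbb{F}_2^m$ of these rounds. Run Algorithm 2 (described in the context) on $F$ with a polynomial $q(n)$ and a constant $\sigma\in(0,1)$. If Algorithm 2 outputs a truncated differential $(a,b)$, then, except with probability negligible in $n$, there exists a subset $\mathcal{K}'\subseteq\mathcal{K}$ with $|\mathcal{K}'|/|\mathcal{K}|>1-\frac{1}{q(n)}$ such that for every $k\in\mathcal{K}'$, $$\frac{\big|\{x\in\mathbb{F}_2^n : F_k(x\oplus a)\oplus F_k(x)\text{ matches } b\}\big|}{2^n}>1-\sigma .$$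
   Context: Notation: $\oplus$ is bitwise XOR, $+$ is addition in $\mathbb{F}_2$, $u\cdot w$ is the standard inner product over $\mathbb{F}_2$. Write $F=(F_1,\dots,F_n)$ with component Boolean functions $F_j:\mathbb{F}_2^{n+m}\to\mathbb{F}_2$ (input $z=(x,k)$). Walsh spectrum: for $f:\mathbb{F}_2^N\to\mathbb{F}_2$, $S_f(\omega)=2^{-N}\sum_{x\in\mathbb{F}_2^N}(-1)^{f(x)+\omega\cdot x}$. Running the Bernstein–Vazirani (BV) algorithm on $f$ (implemented by the attacker's own quantum circuit) returns a vector $\omega\in\mathbb{F}_2^N$ with probability $S_f(\omega)^2$; distinct runs are independent. Truncated differential: a pair $(a,b)$ with $a\in\mathbb{F}_2^n$ and $b=(b_1,\dots,b_n)\in\{0,1,\times\}^n$; positions $j$ with $b_j\ne\times$ are "predicted". A vector $d\in\mathbb{F}_2^n$ matches $b$ if $d_j=b_j$ for every predicted position $j$. Algorithm 2 (parameters: polynomial $q(n)$, constant $\sigma$; set $p(n)=\frac{1}{2\sigma^2}q(n)^2n^3$): 1. For each $j=1,\dots,n$: run BV on $F_j$ independently $p(n)$ times, obtaining $\omega\in\mathbb{F}_2^{n+m}$; let $H_j$ be the set of truncations $(\omega_1,\dots,\omega_n)$ of these outputs. For $i\in\{0,1\}$ let $A_j^i=\{x\in\mathbb{F}_2^n : x\cdot\omega=i\ \forall\omega\in H_j\}$ and $A_j=A_j^0\cup A_j^1$. 2. For $t=n,n-1,\dots,1$: if $2^t(1-\sigma)\le 1$, output "No" and stop. Otherwise, if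 there are distinct indices $j_1,\dots,j_t$ with $A_{j_1}\cap\dots\cap A_{j_t}\supsetneq\{\mathbf 0\}$, choose any nonzero $a$ in this intersection, set $b_j=i_j$ for $j\in\{j_1,\dots,j_t\}$, where $i_j$ is such that $a\in A_j^{i_j}$, and $b_j=\times$ otherwise; output $(a,b)$ and stop. If the loop ends, output "No". A probability is negligible in $n$ if it is bounded by a function of $n$ that is eventually smaller than $1/\mathrm{poly}(n)$ for every polynomial; probabilities are over the randomness of the BV measurements. *)

theory Defs
  imports "HOL-Probability.Probability" "HOL-Computational_Algebra.Polynomial"
begin

text \<open>Vectors of F_2^N are boolean lists of length N; True = 1.\<close>

definition vecs :: "nat \<Rightarrow> bool list set" where
  "vecs N = {xs. length xs = N}"

definition bxor :: "bool list \<Rightarrow> bool list \<Rightarrow> bool list" where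
  "bxor u w = map2 (\<noteq>) u w"

definition ip :: "bool list \<Rightarrow> bool list \<Rightarrow> bool" where
  "ip u w = odd (card {i. i < length u \<and> i < length w \<and> u ! i \<and> w ! i})"

definition walsh :: "nat \<Rightarrow> (bool list \<Rightarrow> bool) \<Rightarrow> bool list \<Rightarrow> real" where
  "walsh N f \<omega> = (\<Sum>x\<in>vecs N. (if f x \<noteq> ip \<omega> x then -1 else 1)) / 2 ^ N"

text \<open>Output distribution of one Bernstein-Vazirani run on f : F_2^N -> F_2.\<close>
definition BV :: "nat \<Rightarrow> (bool list \<Rightarrow> bool) \<Rightarrow> bool list pmf" where
  "BV N f = embed_pmf (\<lambda>\<omega>. if length \<omega> = N then (walsh N f \<omega>)\<^sup>2 else 0)"

text \<open>Component function F_j (j = 0..n-1) of F as a Boolean function of z = (x,k).\<close>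
definition comp :: "nat \<Rightarrow> (bool list \<Rightarrow> bool list \<Rightarrow> bool list) \<Rightarrow> nat \<Rightarrow> bool list \<Rightarrow> bool" where
  "comp n F j z = F (take n z) (drop n z) ! j"

text \<open>Truncated differential pattern: None stands for the symbol \<times>.\<close>
definition matches :: "bool list \<Rightarrow> bool option list \<Rightarrow> bool" where
  "matches d b = (\<forall>j < length b. \<forall>c. b ! j = Some c \<longrightarrow> d ! j = c)"

definition nruns :: "real \<Rightarrow> real \<Rightarrow> nat \<Rightarrow> nat" where
  "nruns qn \<sigma> n = nat \<lceil>qn\<^sup>2 * real n ^ 3 / (2 * \<sigma>\<^sup>2)\<rceil>"

text \<open>Sets built in step 1 from the sample table \<omega>, indexed by (j,t).\<close>
definition Hset :: "nat \<Rightarrow> nat \<Rightarrow> (nat \<times> nat \<Rightarrow> bool list) \<Rightarrow> nat \<Rightarrow> bool list set" where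
  "Hset n p \<omega> j = {take n (\<omega> (j, t)) | t. t < p}"

definition Aset :: "nat \<Rightarrow> bool list set \<Rightarrow> bool \<Rightarrow> bool list set" where
  "Aset n H i = {x \<in> vecs n. \<forall>w\<in>H. ip x w = i}"

text \<open>All possible outputs (a,b) of step 2 at level t (over all admissible choices).\<close>
definition cands :: "nat \<Rightarrow> (nat \<Rightarrow> bool list set) \<Rightarrow> nat \<Rightarrow> (bool list \<times> bool option list) set" where
  "cands n H t = {(a, b). \<exists>J. J \<subseteq> {..<n} \<and> card J = t \<and> a \<in> vecs n \<and> a \<noteq> replicate n False
      \<and> (\<forall>j\<in>J. a \<in> Aset n (H j) False \<union> Aset n (H j) True)
      \<and> length b = n
      \<and> (\<forall>j<n. (j \<notin> J \<longrightarrow> b ! j = None) \<and> (j \<in> J \<longrightarrow> (\<exists>i. b ! j = Some i \<and> a \<in> Aset n (H j) i)))}"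

text \<open>Output of Algorithm 2 (None = "No"); sel resolves the "choose any" step.\<close>
definition alg2 :: "nat \<Rightarrow> real \<Rightarrow> (nat \<Rightarrow> nat \<Rightarrow> (bool list \<times> bool option list) set \<Rightarrow> bool list \<times> bool option list)
   \<Rightarrow> (nat \<Rightarrow> bool list set) \<Rightarrow> (bool list \<times> bool option list) option" where
  "alg2 n \<sigma> sel H =
     (let T = {t \<in> {1..n}. 2 ^ t * (1 - \<sigma>) > (1::real) \<and> cands n H t \<noteq> {}}
      in if T = {} then None else Some (sel n (Max T) (cands n H (Max T))))"

definition good_td :: "nat \<Rightarrow> nat \<Rightarrow> (bool list \<Rightarrow> bool list \<Rightarrow> bool list) \<Rightarrow> real \<Rightarrow> real
    \<Rightarrow> bool list \<Rightarrow> bool option list \<Rightarrow> bool" where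
  "good_td n m F qn \<sigma> a b =
     (\<exists>K' \<subseteq> vecs m. real (card K') / real (card (vecs m)) > 1 - 1 / qn \<and>
        (\<forall>k\<in>K'. real (card {x \<in> vecs n. matches (bxor (F (bxor x a) k) (F x k)) b}) / 2 ^ n > 1 - \<sigma>))"

definition negligible :: "(nat \<Rightarrow> real) \<Rightarrow> bool" where
  "negligible f = (\<forall>c::nat. \<forall>\<^sub>F n in sequentially. \<bar>f n\<bar> < 1 / real n ^ c)"

end

theory Submission
  imports Defs "HOL-Real_Asymp.Real_Asymp"
begin


lemma ip_Nil1[simp]: "ip [] w = False" by (simp add: ip_def)
lemma ip_Nil2[simp]: "ip u [] = False" by (simp add: ip_def)

lemma ip_Cons[simp]: "ip (u#us) (w#ws) = ((u \<and> w) \<noteq> ip us ws)"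
proof -
  let ?S = "{i. i < length us \<and> i < length ws \<and> us ! i \<and> ws ! i}"
  have eq: "{i. i < length (u#us) \<and> i < length (w#ws) \<and> (u#us) ! i \<and> (w#ws) ! i}
        = (if u \<and> w then {0} else {}) \<union> Suc ` ?S"
  proof (rule set_eqI)
    fix i show "i \<in> {i. i < length (u#us) \<and> i < length (w#ws) \<and> (u#us) ! i \<and> (w#ws) ! i}
        \<longleftrightarrow> i \<in> (if u \<and> w then {0} else {}) \<union> Suc ` ?S"
      by (cases i) (auto simp: image_iff)
  qed
  have fin: "finite ?S" by auto
  have "card (Suc ` ?S) = card ?S" by (simp add: card_image)
  moreover have "0 \<notin> Suc ` ?S" by auto
  ultimately show ?thesis unfolding ip_def eq using fin by (auto simp: card_insert_if)
qed

lemma ip_sym: "ip u w = ip w u"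
  unfolding ip_def by (metis (no_types, lifting) Collect_cong)




definition sg :: "bool \<Rightarrow> real" where "sg b = (if b then -1 else 1)"

lemma sg_neq: "sg (a \<noteq> b) = sg a * sg b" by (simp add: sg_def)
lemma sg_sq[simp]: "sg a * sg a = 1" by (simp add: sg_def)

lemma vecs_0: "vecs 0 = {[]}" by (auto simp: vecs_def)
lemma vecs_Suc: "vecs (Suc N) = Cons True ` vecs N \<union> Cons False ` vecs N"
  by (auto simp: vecs_def length_Suc_conv)

lemma finite_vecs[simp]: "finite (vecs N)"
  by (induction N) (auto simp: vecs_0 vecs_Suc)

lemma card_vecs: "card (vecs N) = 2 ^ N"
proof (induction N)
  case 0 then show ?case by (simp add: vecs_0)
next
  case (Suc N)
  have "card (vecs (Suc N)) = card (Cons True ` vecs N) + card (Cons False ` vecs N)"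
    unfolding vecs_Suc by (rule card_Un_disjoint) auto
  also have "\<dots> = 2 * card (vecs N)" by (simp add: card_image)
  finally show ?case using Suc by simp
qed

lemma sum_vecs_Suc: "(\<Sum>x\<in>vecs (Suc N). g x) = (\<Sum>x\<in>vecs N. g (True#x)) + (\<Sum>x\<in>vecs N. g (False#x))"
proof -
  have "(\<Sum>x\<in>vecs (Suc N). g x) = (\<Sum>x\<in>Cons True ` vecs N. g x) + (\<Sum>x\<in>Cons False ` vecs N. g x)"
    unfolding vecs_Suc by (rule sum.union_disjoint) auto
  also have "\<dots> = (\<Sum>x\<in>vecs N. g (True#x)) + (\<Sum>x\<in>vecs N. g (False#x))"
    by (simp add: sum.reindex)
  finally show ?thesis .
qed

lemma bxor_Cons[simp]: "bxor (a#u) (b#v) = (a \<noteq> b) # bxor u v" by (simp add: bxor_def)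
lemma bxor_Nil[simp]: "bxor [] v = []" "bxor u [] = []" by (auto simp: bxor_def)
lemma length_bxor[simp]: "length (bxor u v) = min (length u) (length v)" by (simp add: bxor_def)
lemma bxor_vecs: "x \<in> vecs N \<Longrightarrow> y \<in> vecs N \<Longrightarrow> bxor x y \<in> vecs N" by (simp add: vecs_def)

lemma ip_bxor: "length w = length y \<Longrightarrow> length y = length z \<Longrightarrow> ip w (bxor y z) = (ip w y \<noteq> ip w z)"
proof (induction w arbitrary: y z)
  case Nil then show ?case by simp
next
  case (Cons a w)
  note IH0 = Cons.IH and P = Cons.prems
  show ?case
  proof (cases y)
    case Nil then show ?thesis using P by simp
  next
    case (Cons b y')
    show ?thesis
    proof (cases z)
      case Nil then show ?thesis using P \<open>y = b#y'\<close> by simp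
    next
      case (Cons c z')
      have IH: "ip w (bxor y' z') = (ip w y' \<noteq> ip w z')"
        using IH0 P \<open>y = b#y'\<close> \<open>z = c#z'\<close> by simp
      show ?thesis using \<open>y = b#y'\<close> \<open>z = c#z'\<close> IH
        by (cases a; cases b; cases c; cases "ip w y'"; cases "ip w z'"; simp)
    qed
  qed
qed

lemma orth: "length y = N \<Longrightarrow> (\<Sum>\<omega>\<in>vecs N. sg (ip \<omega> y)) = (if y = replicate N False then 2^N else 0)"
proof (induction N arbitrary: y)
  case 0 then show ?case by (simp add: vecs_0 sg_def)
next
  case (Suc N)
  then obtain c ys where y: "y = c#ys" "length ys = N" by (cases y) auto
  show ?case
  proof (cases c)
    case True
    have "(\<Sum>\<omega>\<in>vecs (Suc N). sg (ip \<omega> y)) = (\<Sum>x\<in>vecs N. sg (\<not> ip x ys)) + (\<Sum>x\<in>vecs N. sg (ip x ys))"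
      by (simp add: sum_vecs_Suc y True)
    also have "\<dots> = 0" by (simp add: sg_def sum.distrib[symmetric]) (rule sum.neutral, simp)
    finally show ?thesis using y True by simp
  next
    case False
    have "(\<Sum>\<omega>\<in>vecs (Suc N). sg (ip \<omega> y)) = 2 * (\<Sum>x\<in>vecs N. sg (ip x ys))"
      by (simp add: sum_vecs_Suc y False)
    then show ?thesis using Suc.IH[OF y(2)] y False by auto
  qed
qed

lemma walsh_alt: "walsh N f \<omega> = (\<Sum>x\<in>vecs N. sg (f x) * sg (ip \<omega> x)) / 2 ^ N"
  unfolding walsh_def by (intro arg_cong[where f="\<lambda>s. s / 2^N"] sum.cong) (auto simp: sg_def)

lemma nth_bxor: "i < length u \<Longrightarrow> i < length v \<Longrightarrow> bxor u v ! i = (u!i \<noteq> v!i)"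
  by (simp add: bxor_def)

lemma bxor3_zero:
  assumes "x \<in> vecs N" "y \<in> vecs N" "a \<in> vecs N"
  shows "bxor (bxor x y) a = replicate N False \<longleftrightarrow> y = bxor x a"
proof
  assume h: "bxor (bxor x y) a = replicate N False"
  show "y = bxor x a"
  proof (rule nth_equalityI)
    show "length y = length (bxor x a)" using assms by (simp add: vecs_def)
    fix i assume "i < length y"
    then have i: "i < N" using assms by (simp add: vecs_def)
    have "bxor (bxor x y) a ! i = False" using h i by simp
    then show "y ! i = bxor x a ! i" using i assms by (simp add: vecs_def nth_bxor) blast
  qed
next
  assume h: "y = bxor x a"
  show "bxor (bxor x y) a = replicate N False"
  proof (rule nth_equalityI)
    show "length (bxor (bxor x y) a) = length (replicate N False)" using assms by (simp add: vecs_def)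
    fix i assume "i < length (bxor (bxor x y) a)"
    then have i: "i < N" using assms by (simp add: vecs_def)
    then show "bxor (bxor x y) a ! i = replicate N False ! i" using i assms h
      by (simp add: vecs_def nth_bxor) (cases "x!i"; cases "a!i"; simp)
  qed
qed

lemma autocorr:
  assumes a: "a \<in> vecs N"
  shows "(\<Sum>\<omega>\<in>vecs N. (walsh N f \<omega>)\<^sup>2 * sg (ip \<omega> a)) = (\<Sum>x\<in>vecs N. sg (f x) * sg (f (bxor x a))) / 2 ^ N"
proof -
  define g where "g x = sg (f x)" for x
  have chi: "sg (ip \<omega> x) * sg (ip \<omega> y) * sg (ip \<omega> a) = sg (ip \<omega> (bxor (bxor x y) a))"
    if "\<omega> \<in> vecs N" "x \<in> vecs N" "y \<in> vecs N" for \<omega> x y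
    using that a
    by (simp add: vecs_def ip_bxor) (cases "ip \<omega> x"; cases "ip \<omega> y"; cases "ip \<omega> a"; simp add: sg_def)
  have "(\<Sum>\<omega>\<in>vecs N. (walsh N f \<omega>)\<^sup>2 * sg (ip \<omega> a))
      = (\<Sum>\<omega>\<in>vecs N. \<Sum>x\<in>vecs N. \<Sum>y\<in>vecs N. g x * g y * (sg (ip \<omega> x) * sg (ip \<omega> y) * sg (ip \<omega> a))) / (2^N * 2^N)"
    unfolding walsh_alt power2_eq_square g_def
    by (simp add: sum_divide_distrib[symmetric] sum_distrib_left sum_distrib_right mult_ac)
  also have "\<dots> = (\<Sum>x\<in>vecs N. \<Sum>y\<in>vecs N. \<Sum>\<omega>\<in>vecs N. g x * g y * sg (ip \<omega> (bxor (bxor x y) a))) / (2^N * 2^N)"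
  proof -
    let ?V = "vecs N"
    let ?H = "\<lambda>\<omega> x y. g x * g y * (sg (ip \<omega> x) * sg (ip \<omega> y) * sg (ip \<omega> a))"
    have "(\<Sum>\<omega>\<in>?V. \<Sum>x\<in>?V. \<Sum>y\<in>?V. ?H \<omega> x y) = (\<Sum>x\<in>?V. \<Sum>\<omega>\<in>?V. \<Sum>y\<in>?V. ?H \<omega> x y)"
      by (rule sum.swap)
    also have "\<dots> = (\<Sum>x\<in>?V. \<Sum>y\<in>?V. \<Sum>\<omega>\<in>?V. ?H \<omega> x y)"
    proof (rule sum.cong[OF refl])
      fix x assume "x \<in> ?V"
      show "(\<Sum>\<omega>\<in>?V. \<Sum>y\<in>?V. ?H \<omega> x y) = (\<Sum>y\<in>?V. \<Sum>\<omega>\<in>?V. ?H \<omega> x y)"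
        by (rule sum.swap)
    qed
    also have "\<dots> = (\<Sum>x\<in>vecs N. \<Sum>y\<in>vecs N. \<Sum>\<omega>\<in>vecs N. g x * g y * sg (ip \<omega> (bxor (bxor x y) a)))"
      by (intro sum.cong refl) (simp add: chi)
    finally show ?thesis by simp
  qed
  also have "\<dots> = (\<Sum>x\<in>vecs N. \<Sum>y\<in>vecs N. g x * g y * (if y = bxor x a then 2^N else 0)) / (2^N * 2^N)"
    apply (intro arg_cong[where f="\<lambda>s. s / _"] sum.cong refl)
    apply (subst sum_distrib_left[symmetric])
    apply (subst orth)
    using a apply (simp add: vecs_def)
    by (simp add: bxor3_zero a)
  also have "\<dots> = (\<Sum>x\<in>vecs N. g x * g (bxor x a) * 2^N) / (2^N * 2^N)"
    apply (intro arg_cong[where f="\<lambda>s. s / _"] sum.cong refl)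
    apply (simp add: if_distrib[where f="\<lambda>z. _ * z"] cong: if_cong)
    using bxor_vecs[OF _ a] by (simp add: sum.delta)
  also have "\<dots> = (\<Sum>x\<in>vecs N. g x * g (bxor x a)) / 2^N"
    by (simp add: sum_distrib_right[symmetric])
  finally show ?thesis by (simp add: g_def)
qed

lemma bxor_zero: "length x = N \<Longrightarrow> bxor x (replicate N False) = x"
  by (induction x arbitrary: N) (auto simp: bxor_def)

lemma parseval: "(\<Sum>\<omega>\<in>vecs N. (walsh N f \<omega>)\<^sup>2) = 1"
proof -
  have z: "replicate N False \<in> vecs N" by (simp add: vecs_def)
  have ip0: "ip \<omega> (replicate N False) = False" for \<omega>
  proof (induction \<omega> arbitrary: N)
    case Nil then show ?case by simp
  next
    case (Cons c \<omega>) then show ?case by (cases N) auto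
  qed
  have "(\<Sum>\<omega>\<in>vecs N. (walsh N f \<omega>)\<^sup>2) = (\<Sum>\<omega>\<in>vecs N. (walsh N f \<omega>)\<^sup>2 * sg (ip \<omega> (replicate N False)))"
    by (simp add: ip0 sg_def)
  also have "\<dots> = (\<Sum>x\<in>vecs N. sg (f x) * sg (f (bxor x (replicate N False)))) / 2 ^ N"
    by (rule autocorr[OF z])
  also have "\<dots> = 1" by (simp add: bxor_zero vecs_def card_vecs[unfolded vecs_def])
  finally show ?thesis .
qed




lemma vecs_eq: "vecs N = {\<omega>. length \<omega> = N}" by (simp add: vecs_def)

lemma pmf_BV: "pmf (BV N f) \<omega> = (if length \<omega> = N then (walsh N f \<omega>)\<^sup>2 else 0)"
  unfolding BV_def
proof (rule pmf_embed_pmf)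
  show "0 \<le> (if length x = N then (walsh N f x)\<^sup>2 else 0)" for x by simp
  have "(\<integral>\<^sup>+ x. ennreal (if length x = N then (walsh N f x)\<^sup>2 else 0) \<partial>count_space UNIV)
      = (\<Sum>x\<in>vecs N. ennreal (if length x = N then (walsh N f x)\<^sup>2 else 0))"
    apply (rule nn_integral_count_space') using finite_vecs[of N] by (auto simp: vecs_def)
  also have "\<dots> = ennreal (\<Sum>x\<in>vecs N. (if length x = N then (walsh N f x)\<^sup>2 else 0))"
    by (rule sum_ennreal) simp
  also have "(\<Sum>x\<in>vecs N. (if length x = N then (walsh N f x)\<^sup>2 else 0)) = (\<Sum>x\<in>vecs N. (walsh N f x)\<^sup>2)"
    by (rule sum.cong) (auto simp: vecs_def)
  finally show "(\<integral>\<^sup>+ x. ennreal (if length x = N then (walsh N f x)\<^sup>2 else 0) \<partial>count_space UNIV) = 1"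
    by (simp add: parseval)
qed

lemma measure_BV: "measure_pmf.prob (BV N f) A = (\<Sum>\<omega>\<in>vecs N \<inter> A. (walsh N f \<omega>)\<^sup>2)"
proof -
  have "measure_pmf.prob (BV N f) A = measure_pmf.prob (BV N f) (vecs N \<inter> A)"
    by (rule measure_prob_cong_0) (auto simp: pmf_BV vecs_def)
  also have "\<dots> = sum (pmf (BV N f)) (vecs N \<inter> A)"
    by (rule measure_measure_pmf_finite) simp
  also have "\<dots> = (\<Sum>\<omega>\<in>vecs N \<inter> A. (walsh N f \<omega>)\<^sup>2)"
    by (rule sum.cong) (auto simp: pmf_BV vecs_def)
  finally show ?thesis .
qed

lemma ip_rep0: "ip (replicate m False) w = False"
proof (induction w arbitrary: m)
  case Nil then show ?case by simp
next
  case (Cons c w) then show ?case by (cases m) auto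
qed

lemma ip_app_zero: "length a = n \<Longrightarrow> length \<omega> = n + m \<Longrightarrow> ip a (take n \<omega>) = ip (a @ replicate m False) \<omega>"
proof (induction a arbitrary: n \<omega>)
  case Nil then show ?case by (simp add: ip_rep0)
next
  case (Cons x a)
  then obtain n' where n: "n = Suc n'" by (cases n) auto
  from Cons.prems n obtain c \<omega>' where w: "\<omega> = c # \<omega>'" by (cases \<omega>) auto
  show ?case using Cons.IH[of n' \<omega>'] Cons.prems n w by simp
qed

lemma card_split: "finite V \<Longrightarrow> card {x\<in>V. P x} + card {x\<in>V. \<not> P x} = card V"
proof -
  assume f: "finite V"
  have "card V = card ({x\<in>V. P x} \<union> {x\<in>V. \<not> P x})" by (rule arg_cong[where f=card]) auto
  also have "\<dots> = card {x\<in>V. P x} + card {x\<in>V. \<not> P x}" by (rule card_Un_disjoint) (use f in auto)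
  finally show ?thesis by simp
qed

lemma sum_sg: "finite V \<Longrightarrow> (\<Sum>x\<in>V. sg (P x)) = real (card {x\<in>V. \<not> P x}) - real (card {x\<in>V. P x})"
proof -
  assume f: "finite V"
  have "(\<Sum>x\<in>V. sg (P x)) = (\<Sum>x\<in>V. (if P x then -1 else 1))" by (simp add: sg_def)
  also have "\<dots> = (\<Sum>x\<in>V \<inter> {x. P x}. -1) + (\<Sum>x\<in>V \<inter> - {x. P x}. 1)"
    by (rule sum.If_cases) (rule f)
  also have "\<dots> = - real (card (V \<inter> {x. P x})) + real (card (V \<inter> - {x. P x}))" by simp
  also have "V \<inter> {x. P x} = {x\<in>V. P x}" by auto
  also have "V \<inter> - {x. P x} = {x\<in>V. \<not> P x}" by auto
  finally show ?thesis by simp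
qed

lemma sum_split_real: "finite V \<Longrightarrow> (\<Sum>x\<in>V. h x) = (\<Sum>x\<in>V \<inter> {x. P x}. h x) + (\<Sum>x\<in>V \<inter> {x. \<not> P x}. h x)"
proof -
  assume f: "finite V"
  have "(\<Sum>x\<in>V. h x) = (\<Sum>x\<in>V. if P x then h x else h x)" by simp
  also have "\<dots> = (\<Sum>x\<in>V \<inter> {x. P x}. h x) + (\<Sum>x\<in>V \<inter> - {x. P x}. h x)"
    by (rule sum.If_cases) (rule f)
  also have "V \<inter> - {x. P x} = V \<inter> {x. \<not> P x}" by auto
  finally show ?thesis .
qed

lemma prob_BV_event:
  assumes a: "length a = n" and N: "N = n + m"
  shows "measure_pmf.prob (BV N f) {\<omega>. ip a (take n \<omega>) \<noteq> i}
       = real (card {z\<in>vecs N. (f (bxor z (a @ replicate m False)) \<noteq> f z) \<noteq> i}) / 2 ^ N"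
proof -
  define \<alpha> where "\<alpha> = a @ replicate m False"
  have \<alpha>: "\<alpha> \<in> vecs N" using a N by (simp add: \<alpha>_def vecs_def)
  define w where "w \<omega> = (walsh N f \<omega>)\<^sup>2" for \<omega>
  define D where "D z = (f (bxor z \<alpha>) \<noteq> f z)" for z
  let ?V = "vecs N"
  define P where "P = (\<Sum>\<omega>\<in>?V \<inter> {\<omega>. ip \<omega> \<alpha>}. w \<omega>)"
  define Q where "Q = (\<Sum>\<omega>\<in>?V \<inter> {\<omega>. \<not> ip \<omega> \<alpha>}. w \<omega>)"
  have PQ1: "P + Q = 1"
    using parseval[of N f] sum_split_real[of ?V w "\<lambda>\<omega>. ip \<omega> \<alpha>"] by (simp add: P_def Q_def w_def)
  have "(\<Sum>\<omega>\<in>?V. w \<omega> * sg (ip \<omega> \<alpha>)) = Q - P"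
  proof -
    have "(\<Sum>\<omega>\<in>?V. w \<omega> * sg (ip \<omega> \<alpha>)) = (\<Sum>\<omega>\<in>?V \<inter> {\<omega>. ip \<omega> \<alpha>}. w \<omega> * sg (ip \<omega> \<alpha>)) + (\<Sum>\<omega>\<in>?V \<inter> {\<omega>. \<not> ip \<omega> \<alpha>}. w \<omega> * sg (ip \<omega> \<alpha>))"
      by (rule sum_split_real) simp
    also have "\<dots> = (\<Sum>\<omega>\<in>?V \<inter> {\<omega>. ip \<omega> \<alpha>}. - w \<omega>) + (\<Sum>\<omega>\<in>?V \<inter> {\<omega>. \<not> ip \<omega> \<alpha>}. w \<omega>)"
      by (intro arg_cong2[where f="(+)"] sum.cong) (auto simp: sg_def)
    finally show ?thesis by (simp add: P_def Q_def sum_negf)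
  qed
  also have "(\<Sum>\<omega>\<in>?V. w \<omega> * sg (ip \<omega> \<alpha>)) = (\<Sum>x\<in>?V. sg (f x) * sg (f (bxor x \<alpha>))) / 2 ^ N"
    unfolding w_def by (rule autocorr[OF \<alpha>])
  also have "(\<Sum>x\<in>?V. sg (f x) * sg (f (bxor x \<alpha>))) = (\<Sum>x\<in>?V. sg (D x))"
    by (rule sum.cong) (auto simp: D_def sg_def)
  also have "\<dots> = real (card {x\<in>?V. \<not> D x}) - real (card {x\<in>?V. D x})"
    by (rule sum_sg) simp
  finally have QP: "Q - P = (real (card {x\<in>?V. \<not> D x}) - real (card {x\<in>?V. D x})) / 2 ^ N" by simp
  have cs: "real (card {x\<in>?V. D x}) + real (card {x\<in>?V. \<not> D x}) = 2 ^ N"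
    using card_split[of ?V D] card_vecs[of N] by (metis finite_vecs of_nat_add of_nat_numeral of_nat_power)
  define T :: real where "T = 2 ^ N"
  have T: "T > 0" by (simp add: T_def)
  have Q1: "Q = 1 - P" using PQ1 by simp
  have QP': "(1 - P) * T - P * T = real (card {x\<in>?V. \<not> D x}) - real (card {x\<in>?V. D x})"
    using QP T unfolding Q1 T_def[symmetric] by (simp add: field_simps)
  have PT: "P * T = real (card {x\<in>?V. D x})" using QP' cs[folded T_def] by (simp add: algebra_simps)
  then have Pv: "P = real (card {x\<in>?V. D x}) / 2 ^ N" using T by (simp add: T_def field_simps)
  have "Q * T = T - P * T" using Q1 by (simp add: left_diff_distrib)
  then have "Q * T = real (card {x\<in>?V. \<not> D x})" using PT cs[folded T_def] by linarith
  then have Qv: "Q = real (card {x\<in>?V. \<not> D x}) / 2 ^ N" using T by (simp add: T_def field_simps)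
  have ev: "{\<omega>. ip a (take n \<omega>) \<noteq> i} \<inter> ?V = {\<omega>. ip \<omega> \<alpha> \<noteq> i} \<inter> ?V"
    using ip_app_zero[OF a, of _ m] ip_sym N by (auto simp: vecs_def \<alpha>_def)
  have "measure_pmf.prob (BV N f) {\<omega>. ip a (take n \<omega>) \<noteq> i} = (\<Sum>\<omega>\<in>?V \<inter> {\<omega>. ip \<omega> \<alpha> \<noteq> i}. w \<omega>)"
    unfolding measure_BV w_def using ev by (simp add: Int_commute)
  also have "\<dots> = (if i then Q else P)"
    by (cases i) (simp_all add: P_def Q_def)
  also have "\<dots> = real (card {z\<in>?V. D z \<noteq> i}) / 2 ^ N"
    by (cases i) (simp_all add: Pv Qv)
  finally show ?thesis by (simp add: D_def \<alpha>_def)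
qed

lemma prob_Pi_row:
  fixes S :: "'a set" and j n p :: nat
  assumes j: "j < n"
  shows "measure_pmf.prob (Pi_pmf ({..<n} \<times> {..<p}) dflt (\<lambda>(j, t). M j)) {\<omega>. \<forall>t<p. \<omega> (j, t) \<in> S}
     = (measure_pmf.prob (M j) S) ^ p"
proof -
  define B :: "nat \<times> nat \<Rightarrow> 'a set" where "B = (\<lambda>x. if fst x = j then S else UNIV)"
  have "{\<omega>. \<forall>t<p. \<omega> (j, t) \<in> S} = Pi ({..<n} \<times> {..<p}) B"
    using j by (auto simp: B_def Pi_def)
  then have "measure_pmf.prob (Pi_pmf ({..<n} \<times> {..<p}) dflt (\<lambda>(j, t). M j)) {\<omega>. \<forall>t<p. \<omega> (j, t) \<in> S}
      = (\<Prod>x\<in>{..<n} \<times> {..<p}. measure_pmf.prob ((\<lambda>(j, t). M j) x) (B x))"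
    by (simp add: measure_Pi_pmf_Pi)
  also have "\<dots> = (\<Prod>j'\<in>{..<n}. \<Prod>t\<in>{..<p}. measure_pmf.prob (M j') (B (j', t)))"
    by (simp add: prod.cartesian_product split_beta)
  also have "\<dots> = (\<Prod>j'\<in>{..<n}. if j' = j then (measure_pmf.prob (M j) S) ^ p else 1)"
    by (rule prod.cong) (auto simp: B_def)
  also have "\<dots> = (measure_pmf.prob (M j) S) ^ p"
    using j by (simp add: prod.delta)
  finally show ?thesis .
qed




lemma vecs_app: "z \<in> vecs (n + m) \<longleftrightarrow> (\<exists>x k. z = x @ k \<and> x \<in> vecs n \<and> k \<in> vecs m)"
proof
  assume "z \<in> vecs (n + m)"
  then have "z = take n z @ drop n z \<and> take n z \<in> vecs n \<and> drop n z \<in> vecs m"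
    by (simp add: vecs_def)
  then show "\<exists>x k. z = x @ k \<and> x \<in> vecs n \<and> k \<in> vecs m" by blast
qed (auto simp: vecs_def)

lemma split_count:
  "real (card {z\<in>vecs (n + m). P z}) = (\<Sum>k\<in>vecs m. real (card {x\<in>vecs n. P (x @ k)}))"
proof -
  define h where "h z = (if P z then 1 else 0 :: real)" for z
  have c: "real (card {x\<in>V. Q x}) = (\<Sum>x\<in>V. if Q x then 1 else 0)" if "finite V" for V and Q :: "bool list \<Rightarrow> bool"
    using that by (simp add: sum.If_cases Int_def conj_commute)
  have im: "vecs (n + m) = (\<lambda>(x, k). x @ k) ` (vecs n \<times> vecs m)"
    using vecs_app by fastforce
  have inj: "inj_on (\<lambda>(x, k). x @ k) (vecs n \<times> vecs m)"
    by (auto simp: inj_on_def vecs_def)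
  have "real (card {z\<in>vecs (n + m). P z}) = (\<Sum>z\<in>vecs (n + m). h z)"
    by (simp add: c h_def)
  also have "\<dots> = (\<Sum>(x, k)\<in>vecs n \<times> vecs m. h (x @ k))"
    unfolding im by (subst sum.reindex[OF inj]) (simp add: case_prod_unfold)
  also have "\<dots> = (\<Sum>x\<in>vecs n. \<Sum>k\<in>vecs m. h (x @ k))"
    by (simp add: sum.cartesian_product)
  also have "\<dots> = (\<Sum>k\<in>vecs m. \<Sum>x\<in>vecs n. h (x @ k))"
    by (rule sum.swap)
  also have "\<dots> = (\<Sum>k\<in>vecs m. real (card {x\<in>vecs n. P (x @ k)}))"
    by (simp add: c h_def)
  finally show ?thesis .
qed

lemma bxor_app: "length x = length a \<Longrightarrow> bxor (x @ k) (a @ replicate (length k) False) = bxor x a @ k"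
proof (induction x arbitrary: a)
  case Nil
  then show ?case by (induction k) auto
next
  case (Cons c x)
  then obtain d a' where "a = d # a'" by (cases a) auto
  with Cons show ?case by simp
qed

definition delta :: "nat \<Rightarrow> nat \<Rightarrow> (bool list \<Rightarrow> bool list \<Rightarrow> bool list) \<Rightarrow> nat \<Rightarrow> bool list \<Rightarrow> bool \<Rightarrow> real" where
  "delta n m F j a i = real (card {z\<in>vecs (n + m). (comp n F j (bxor z (a @ replicate m False)) \<noteq> comp n F j z) \<noteq> i}) / 2 ^ (n + m)"

lemma delta_sum:
  assumes a: "a \<in> vecs n"
  shows "delta n m F j a i * 2 ^ (n + m) = (\<Sum>k\<in>vecs m. real (card {x\<in>vecs n. (F (bxor x a) k ! j \<noteq> F x k ! j) \<noteq> i}))"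
proof -
  have "delta n m F j a i * 2 ^ (n + m) = real (card {z\<in>vecs (n + m). (comp n F j (bxor z (a @ replicate m False)) \<noteq> comp n F j z) \<noteq> i})"
    by (simp add: delta_def)
  also have "\<dots> = (\<Sum>k\<in>vecs m. real (card {x\<in>vecs n. (comp n F j (bxor (x @ k) (a @ replicate m False)) \<noteq> comp n F j (x @ k)) \<noteq> i}))"
    by (rule split_count)
  also have "\<dots> = (\<Sum>k\<in>vecs m. real (card {x\<in>vecs n. (F (bxor x a) k ! j \<noteq> F x k ! j) \<noteq> i}))"
  proof (rule sum.cong[OF refl])
    fix k assume k: "k \<in> vecs m"
    have "{x\<in>vecs n. (comp n F j (bxor (x @ k) (a @ replicate m False)) \<noteq> comp n F j (x @ k)) \<noteq> i}
        = {x\<in>vecs n. (F (bxor x a) k ! j \<noteq> F x k ! j) \<noteq> i}"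
    proof (rule Collect_cong)
      fix x
      show "(x \<in> vecs n \<and> (comp n F j (bxor (x @ k) (a @ replicate m False)) \<noteq> comp n F j (x @ k)) \<noteq> i)
          = (x \<in> vecs n \<and> (F (bxor x a) k ! j \<noteq> F x k ! j) \<noteq> i)"
      proof (cases "x \<in> vecs n")
        case True
        then have "bxor (x @ k) (a @ replicate m False) = bxor x a @ k"
          using a k bxor_app[of x a k] by (simp add: vecs_def)
        moreover have "length (bxor x a) = n" using True a by (simp add: vecs_def)
        ultimately show ?thesis using True by (simp add: comp_def vecs_def)
      qed simp
    qed
    then show "real (card {x\<in>vecs n. (comp n F j (bxor (x @ k) (a @ replicate m False)) \<noteq> comp n F j (x @ k)) \<noteq> i})
        = real (card {x\<in>vecs n. (F (bxor x a) k ! j \<noteq> F x k ! j) \<noteq> i})" by simp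
  qed
  finally show ?thesis .
qed




lemma card_split_vecs: "real (card {x\<in>vecs N. P x}) + real (card {x\<in>vecs N. \<not> P x}) = 2 ^ N"
proof -
  have h: "card {x\<in>vecs N. P x} + card {x\<in>vecs N. \<not> P x} = 2 ^ N"
    using card_split[of "vecs N" P] card_vecs[of N] by simp
  have "real (card {x\<in>vecs N. P x} + card {x\<in>vecs N. \<not> P x}) = real ((2::nat) ^ N)"
    by (simp only: h)
  then show ?thesis by simp
qed

lemma good_of_small_delta:
  fixes F :: "bool list \<Rightarrow> bool list \<Rightarrow> bool list" and n m :: nat and q \<sigma> :: real
  assumes F_len: "\<And>x k. length x = n \<Longrightarrow> length k = m \<Longrightarrow> length (F x k) = n"
    and q: "q > 0" and \<sigma>: "\<sigma> > 0" and n: "n > 0"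
    and a: "a \<in> vecs n" and J: "J \<subseteq> {..<n}" and Jne: "J \<noteq> {}" and lb: "length b = n"
    and bJ: "\<forall>j<n. (j \<notin> J \<longrightarrow> b!j = None) \<and> (j \<in> J \<longrightarrow> (\<exists>i. b!j = Some i \<and> delta n m F j a i < \<sigma> / (real n * q)))"
  shows "good_td n m F q \<sigma> a b"
proof -
  define \<epsilon> where "\<epsilon> = \<sigma> / (real n * q)"
  have "\<forall>j\<in>J. \<exists>i. b!j = Some i \<and> delta n m F j a i < \<epsilon>" using bJ J \<epsilon>_def by blast
  then obtain ii where ii: "\<And>j. j \<in> J \<Longrightarrow> b!j = Some (ii j) \<and> delta n m F j a (ii j) < \<epsilon>"
    by metis
  have finJ: "finite J" using J finite_subset by blast
  have cJ: "card J \<le> n" using card_mono[OF _ J] by simp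
  have cJ0: "card J > 0" using finJ Jne by (simp add: card_gt_0_iff)
  define X where "X k = {x\<in>vecs n. \<not> matches (bxor (F (bxor x a) k) (F x k)) b}" for k
  define Y where "Y j k = {x\<in>vecs n. (F (bxor x a) k ! j \<noteq> F x k ! j) \<noteq> ii j}" for j k
  have sub: "X k \<subseteq> (\<Union>j\<in>J. Y j k)" if k: "k \<in> vecs m" for k
  proof
    fix x assume "x \<in> X k"
    then have x: "x \<in> vecs n" and nm: "\<not> matches (bxor (F (bxor x a) k) (F x k)) b" by (auto simp: X_def)
    from nm obtain j c where j: "j < n" and bj: "b ! j = Some c"
        and neq: "bxor (F (bxor x a) k) (F x k) ! j \<noteq> c"
      unfolding matches_def lb by blast
    have jJ: "j \<in> J" using bJ j bj by auto
    then have c: "c = ii j" using ii bj by auto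
    have l1: "length (F (bxor x a) k) = n" using F_len x a k by (simp add: vecs_def)
    have l2: "length (F x k) = n" using F_len x k by (simp add: vecs_def)
    have "(F (bxor x a) k ! j \<noteq> F x k ! j) \<noteq> ii j"
      using neq c nth_bxor[of j "F (bxor x a) k" "F x k"] l1 l2 j by simp
    then show "x \<in> (\<Union>j\<in>J. Y j k)" using jJ x by (auto simp: Y_def)
  qed
  have cardX: "real (card (X k)) \<le> (\<Sum>j\<in>J. real (card (Y j k)))" if k: "k \<in> vecs m" for k
  proof -
    have "card (X k) \<le> card (\<Union>j\<in>J. Y j k)"
    proof (rule card_mono)
      show "finite (\<Union>j\<in>J. Y j k)" using finJ by (simp add: Y_def)
    qed (rule sub[OF k])
    also have "\<dots> \<le> (\<Sum>j\<in>J. card (Y j k))" by (rule card_UN_le[OF finJ])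
    finally show ?thesis by (metis of_nat_le_iff of_nat_sum)
  qed
  have "(\<Sum>k\<in>vecs m. real (card (X k))) \<le> (\<Sum>k\<in>vecs m. \<Sum>j\<in>J. real (card (Y j k)))"
    by (rule sum_mono) (rule cardX)
  also have "\<dots> = (\<Sum>j\<in>J. \<Sum>k\<in>vecs m. real (card (Y j k)))" by (rule sum.swap)
  also have "\<dots> = (\<Sum>j\<in>J. delta n m F j a (ii j) * 2 ^ (n + m))"
    by (rule sum.cong[OF refl]) (simp add: Y_def delta_sum[OF a])
  also have "\<dots> < (\<Sum>j\<in>J. \<epsilon> * 2 ^ (n + m))"
    by (rule sum_strict_mono[OF finJ Jne]) (simp add: ii)
  also have "\<dots> = real (card J) * \<epsilon> * 2 ^ (n + m)" by simp
  also have "\<dots> \<le> real n * \<epsilon> * 2 ^ (n + m)"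
    using cJ \<sigma> q by (intro mult_right_mono) (auto simp: \<epsilon>_def)
  also have "\<dots> = \<sigma> * 2 ^ n * 2 ^ m / q" using n by (simp add: \<epsilon>_def power_add)
  finally have sumX: "(\<Sum>k\<in>vecs m. real (card (X k))) < \<sigma> * 2 ^ n * 2 ^ m / q" .
  define P where "P k = (real (card (X k)) < \<sigma> * 2 ^ n)" for k
  define K' where "K' = {k\<in>vecs m. P k}"
  define Bad where "Bad = {k\<in>vecs m. \<not> P k}"
  have "\<sigma> * 2 ^ n * real (card Bad) = (\<Sum>k\<in>Bad. \<sigma> * 2 ^ n)" by simp
  also have "\<dots> \<le> (\<Sum>k\<in>Bad. real (card (X k)))"
    by (rule sum_mono) (auto simp: Bad_def P_def)
  also have "\<dots> \<le> (\<Sum>k\<in>vecs m. real (card (X k)))"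
    by (rule sum_mono2) (auto simp: Bad_def)
  finally have "\<sigma> * 2 ^ n * real (card Bad) < \<sigma> * 2 ^ n * (2 ^ m / q)" using sumX by simp
  moreover have pos: "\<sigma> * 2 ^ n > 0" using \<sigma> by simp
  ultimately have cB: "real (card Bad) < 2 ^ m / q" using mult_less_cancel_left_pos by blast
  have cs: "real (card K') + real (card Bad) = 2 ^ m"
    using card_split_vecs[of m P] unfolding K'_def Bad_def .
  have ratio: "real (card K') / real (card (vecs m)) > 1 - 1 / q"
  proof -
    have "real (card K') / real (card (vecs m)) = 1 - real (card Bad) / 2 ^ m"
      using cs by (simp add: card_vecs field_simps)
    moreover have "real (card Bad) / 2 ^ m < 1 / q" using cB q by (simp add: field_simps)
    ultimately show ?thesis by simp
  qed
  have inK: "real (card {x \<in> vecs n. matches (bxor (F (bxor x a) k) (F x k)) b}) / 2 ^ n > 1 - \<sigma>"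
    if k: "k \<in> K'" for k
  proof -
    have Pk: "real (card (X k)) < \<sigma> * 2 ^ n" using k by (simp add: K'_def P_def)
    have "real (card {x \<in> vecs n. matches (bxor (F (bxor x a) k) (F x k)) b}) + real (card (X k)) = 2 ^ n"
      using card_split_vecs[of n "\<lambda>x. matches (bxor (F (bxor x a) k) (F x k)) b"]
      unfolding X_def .
    then show ?thesis using Pk by (simp add: field_simps)
  qed
  show ?thesis unfolding good_td_def
    using ratio inK by (intro exI[of _ K']) (auto simp: K'_def)
qed




lemma alg2_some:
  assumes "alg2 n \<sigma> sel H = Some (a, b)" and sel: "\<And>n t C. C \<noteq> {} \<Longrightarrow> sel n t C \<in> C"
  shows "\<exists>t\<in>{1..n}. (a, b) \<in> cands n H t"
proof -
  define T where "T = {t \<in> {1..n}. 2 ^ t * (1 - \<sigma>) > (1::real) \<and> cands n H t \<noteq> {}}"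
  have TT: "T \<noteq> {}" and ab: "(a, b) = sel n (Max T) (cands n H (Max T))"
    using assms(1) unfolding alg2_def Let_def T_def[symmetric] by (auto split: if_splits)
  have fin: "finite T" by (simp add: T_def)
  have M: "Max T \<in> T" using Max_in[OF fin TT] .
  then have "cands n H (Max T) \<noteq> {}" by (simp add: T_def)
  then have "(a, b) \<in> cands n H (Max T)" using sel ab by metis
  then show ?thesis using M by (auto simp: T_def)
qed

lemma Hset_Aset:
  assumes "a \<in> Aset n (Hset n p \<omega> j) i"
  shows "\<forall>t<p. ip a (take n (\<omega> (j, t))) = i"
  using assms by (auto simp: Aset_def Hset_def)




lemma main_bound:
  fixes F :: "bool list \<Rightarrow> bool list \<Rightarrow> bool list" and n m :: nat and qn \<sigma> :: real
    and sel :: "nat \<Rightarrow> nat \<Rightarrow> (bool list \<times> bool option list) set \<Rightarrow> bool list \<times> bool option list"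
  assumes F_len: "\<And>x k. length x = n \<Longrightarrow> length k = m \<Longrightarrow> length (F x k) = n"
    and qpos: "qn > 0" and \<sigma>0: "0 < \<sigma>" and \<sigma>1: "\<sigma> < 1"
    and sel: "\<And>n t C. C \<noteq> {} \<Longrightarrow> sel n t C \<in> C" and n: "n > 0"
  shows "measure_pmf.prob (Pi_pmf ({..<n} \<times> {..<nruns qn \<sigma> n}) [] (\<lambda>(j, t). BV (n + m) (comp n F j)))
            {\<omega>. \<exists>a b. alg2 n \<sigma> sel (Hset n (nruns qn \<sigma> n) \<omega>) = Some (a, b) \<and> \<not> good_td n m F qn \<sigma> a b}
         \<le> 2 * real n * 2 ^ n * exp (- (real n)\<^sup>2 / 2)"
proof -
  define p where "p = nruns qn \<sigma> n"
  define \<Omega> where "\<Omega> = Pi_pmf ({..<n} \<times> {..<p}) [] (\<lambda>(j, t). BV (n + m) (comp n F j))"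
  define Alg where "Alg = {\<omega>. \<exists>a b. alg2 n \<sigma> sel (Hset n p \<omega>) = Some (a, b) \<and> \<not> good_td n m F qn \<sigma> a b}"
  have rhs0: "0 \<le> 2 * real n * 2 ^ n * exp (- (real n)\<^sup>2 / 2)" by simp
  have "measure_pmf.prob \<Omega> Alg \<le> 2 * real n * 2 ^ n * exp (- (real n)\<^sup>2 / 2)"
  proof (cases "qn < 1")
    case True
    have "good_td n m F qn \<sigma> a b" for a b
    proof -
      have "1 - 1 / qn < 0" using True qpos by (simp add: field_simps)
      then show ?thesis unfolding good_td_def by (intro exI[of _ "{}"]) auto
    qed
    then have "Alg = {}" by (auto simp: Alg_def)
    then show ?thesis using rhs0 by simp
  next
    case False
    then have q1: "qn \<ge> 1" by simp
    define \<epsilon> where "\<epsilon> = \<sigma> / (real n * qn)"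
    have \<epsilon>0: "0 < \<epsilon>" using \<sigma>0 qpos n by (simp add: \<epsilon>_def)
    have "real n * qn \<ge> 1" using q1 n
      by (metis less_one mult_le_cancel_right1 nat_less_le of_nat_1 of_nat_le_iff linorder_not_le mult_le_cancel_left1 order_trans)
    then have \<epsilon>1: "\<epsilon> \<le> 1" using \<sigma>1 \<sigma>0 unfolding \<epsilon>_def by (simp add: divide_le_eq)
    define E where "E j a i = {\<omega>. \<forall>t<p. \<omega> (j, t) \<in> {w. ip a (take n w) = i}}"
      for j :: nat and a :: "bool list" and i :: bool
    define S where "S = {s \<in> {..<n} \<times> vecs n \<times> (UNIV :: bool set). \<epsilon> \<le> delta n m F (fst s) (fst (snd s)) (snd (snd s))}"
    have finS: "finite S" unfolding S_def by (rule finite_subset[of _ "{..<n} \<times> vecs n \<times> UNIV"]) auto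
    have sub: "Alg \<subseteq> (\<Union>s\<in>S. E (fst s) (fst (snd s)) (snd (snd s)))"
    proof
      fix \<omega> assume "\<omega> \<in> Alg"
      then obtain a b where alg: "alg2 n \<sigma> sel (Hset n p \<omega>) = Some (a, b)" and ng: "\<not> good_td n m F qn \<sigma> a b"
        by (auto simp: Alg_def)
      from alg2_some[OF alg sel] obtain t where t: "t \<in> {1..n}" and c: "(a, b) \<in> cands n (Hset n p \<omega>) t"
        by blast
      from c obtain J where J: "J \<subseteq> {..<n}" and cJ: "card J = t" and a: "a \<in> vecs n"
        and lb: "length b = n"
        and bJ0: "\<forall>j<n. (j \<notin> J \<longrightarrow> b ! j = None) \<and> (j \<in> J \<longrightarrow> (\<exists>i. b ! j = Some i \<and> a \<in> Aset n (Hset n p \<omega> j) i))"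
        unfolding cands_def by blast
      have Jne: "J \<noteq> {}" using cJ t by auto
      show "\<omega> \<in> (\<Union>s\<in>S. E (fst s) (fst (snd s)) (snd (snd s)))"
      proof (rule ccontr)
        assume nin: "\<omega> \<notin> (\<Union>s\<in>S. E (fst s) (fst (snd s)) (snd (snd s)))"
        have bJ': "\<forall>j<n. (j \<notin> J \<longrightarrow> b!j = None) \<and> (j \<in> J \<longrightarrow> (\<exists>i. b!j = Some i \<and> delta n m F j a i < \<sigma> / (real n * qn)))"
        proof (intro allI impI conjI)
          fix j assume j: "j < n"
          show "j \<notin> J \<Longrightarrow> b ! j = None" using bJ0 j by blast
          assume jJ: "j \<in> J"
          then obtain i where bi: "b ! j = Some i" and ai: "a \<in> Aset n (Hset n p \<omega> j) i" using bJ0 j by blast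
          have "\<omega> \<in> E j a i" using Hset_Aset[OF ai] by (simp add: E_def)
          then have "(j, a, i) \<notin> S" using nin by force
          then have "delta n m F j a i < \<epsilon>" using j a by (auto simp: S_def)
          then show "\<exists>i. b!j = Some i \<and> delta n m F j a i < \<sigma> / (real n * qn)" using bi by (auto simp: \<epsilon>_def)
        qed
        note gs = good_of_small_delta[OF F_len qpos \<sigma>0 n a J Jne lb]
        have "good_td n m F qn \<sigma> a b" by (rule gs) (assumption, assumption, rule bJ')
        then show False using ng by simp
      qed
    qed
    have measE: "measure_pmf.prob \<Omega> (E j a i) = (1 - delta n m F j a i) ^ p" if j: "j < n" and a: "a \<in> vecs n" for j a i
    proof -
      have "measure_pmf.prob \<Omega> (E j a i) = (measure_pmf.prob (BV (n + m) (comp n F j)) {w. ip a (take n w) = i}) ^ p"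
        unfolding \<Omega>_def E_def by (rule prob_Pi_row[OF j, of p "[]" "\<lambda>j. BV (n + m) (comp n F j)"])
      also have "{w. ip a (take n w) = i} = UNIV - {w. ip a (take n w) \<noteq> i}" by auto
      also have "measure_pmf.prob (BV (n + m) (comp n F j)) (UNIV - {w. ip a (take n w) \<noteq> i})
          = 1 - measure_pmf.prob (BV (n + m) (comp n F j)) {w. ip a (take n w) \<noteq> i}"
        using measure_pmf.prob_compl[of "{w. ip a (take n w) \<noteq> i}" "BV (n + m) (comp n F j)"] by simp
      also have "measure_pmf.prob (BV (n + m) (comp n F j)) {w. ip a (take n w) \<noteq> i} = delta n m F j a i"
        using prob_BV_event[of a n "n + m" m "comp n F j" i] a by (simp add: vecs_def delta_def)
      finally show ?thesis .
    qed
    have bndE: "measure_pmf.prob \<Omega> (E (fst s) (fst (snd s)) (snd (snd s))) \<le> (1 - \<epsilon>) ^ p" if s: "s \<in> S" for s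
    proof -
      obtain j a i where sj: "s = (j, a, i)" by (cases s) auto
      have j: "j < n" and a: "a \<in> vecs n" and d: "\<epsilon> \<le> delta n m F j a i" using s by (auto simp: S_def sj)
      have "measure_pmf.prob \<Omega> (E j a i) = (1 - delta n m F j a i) ^ p" by (rule measE[OF j a])
      moreover have "0 \<le> 1 - delta n m F j a i"
      proof -
        have "0 \<le> measure_pmf.prob \<Omega> (E j a i)" by simp
        then have "0 \<le> (1 - delta n m F j a i) ^ p" using measE[OF j a] by simp
        have "delta n m F j a i = measure_pmf.prob (BV (n + m) (comp n F j)) {w. ip a (take n w) \<noteq> i}"
          using prob_BV_event[of a n "n + m" m "comp n F j" i] a by (simp add: vecs_def delta_def)
        then show ?thesis by simp
      qed
      ultimately have "measure_pmf.prob \<Omega> (E j a i) \<le> (1 - \<epsilon>) ^ p"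
        using d by (simp add: power_mono)
      then show ?thesis by (simp add: sj)
    qed
    have "measure_pmf.prob \<Omega> Alg \<le> measure_pmf.prob \<Omega> (\<Union>s\<in>S. E (fst s) (fst (snd s)) (snd (snd s)))"
      by (rule measure_pmf.finite_measure_mono[OF sub]) simp
    also have "\<dots> \<le> (\<Sum>s\<in>S. measure_pmf.prob \<Omega> (E (fst s) (fst (snd s)) (snd (snd s))))"
      by (rule measure_pmf.finite_measure_subadditive_finite[OF finS]) simp
    also have "\<dots> \<le> (\<Sum>s\<in>S. (1 - \<epsilon>) ^ p)" by (rule sum_mono) (rule bndE)
    also have "\<dots> = real (card S) * (1 - \<epsilon>) ^ p" by simp
    also have "\<dots> \<le> real (2 * n * 2 ^ n) * (1 - \<epsilon>) ^ p"
    proof (rule mult_right_mono)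
      have "card S \<le> card ({..<n} \<times> vecs n \<times> (UNIV :: bool set))"
        by (rule card_mono) (auto simp: S_def)
      also have "\<dots> = 2 * n * 2 ^ n" by (simp add: card_cartesian_product card_vecs)
      finally show "real (card S) \<le> real (2 * n * 2 ^ n)" by linarith
      show "0 \<le> (1 - \<epsilon>) ^ p" using \<epsilon>1 by simp
    qed
    also have "\<dots> \<le> real (2 * n * 2 ^ n) * exp (- (real n)\<^sup>2 / 2)"
    proof (rule mult_left_mono)
      have "(1 - \<epsilon>) ^ p \<le> exp (- \<epsilon>) ^ p"
        using \<epsilon>1 exp_ge_add_one_self[of "- \<epsilon>"] by (intro power_mono) auto
      also have "\<dots> = exp (real p * (- \<epsilon>))" by (rule exp_of_nat_mult[symmetric])
      also have "\<dots> \<le> exp (- (real n)\<^sup>2 / 2)"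
      proof -
        have pge: "real p \<ge> qn\<^sup>2 * real n ^ 3 / (2 * \<sigma>\<^sup>2)"
          unfolding p_def nruns_def by (rule real_nat_ceiling_ge)
        have "\<epsilon> * real p \<ge> \<epsilon> * (qn\<^sup>2 * real n ^ 3 / (2 * \<sigma>\<^sup>2))"
          using mult_left_mono[OF pge, of \<epsilon>] \<epsilon>0 by linarith
        also have "\<epsilon> * (qn\<^sup>2 * real n ^ 3 / (2 * \<sigma>\<^sup>2)) = (qn / \<sigma>) * ((real n)\<^sup>2 / 2)"
          using n \<sigma>0 qpos by (simp add: \<epsilon>_def field_simps power2_eq_square power3_eq_cube)
        also have "(qn / \<sigma>) * ((real n)\<^sup>2 / 2) \<ge> 1 * ((real n)\<^sup>2 / 2)"
        proof (rule mult_right_mono)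
          show "1 \<le> qn / \<sigma>" using q1 \<sigma>0 \<sigma>1 by (simp add: field_simps)
        qed simp
        finally have "(real n)\<^sup>2 / 2 \<le> \<epsilon> * real p" by simp
        then show ?thesis by (simp add: mult.commute)
      qed
      finally show "(1 - \<epsilon>) ^ p \<le> exp (- (real n)\<^sup>2 / 2)" .
    qed simp
    also have "\<dots> = 2 * real n * 2 ^ n * exp (- (real n)\<^sup>2 / 2)" by simp
    finally show ?thesis .
  qed
  then show ?thesis unfolding \<Omega>_def Alg_def p_def .
qed




theorem theorem3:
  fixes F :: "nat \<Rightarrow> bool list \<Rightarrow> bool list \<Rightarrow> bool list"
    and m :: "nat \<Rightarrow> nat"
    and q :: "nat \<Rightarrow> real"
    and \<sigma> :: real
    and sel :: "nat \<Rightarrow> nat \<Rightarrow> (bool list \<times> bool option list) set \<Rightarrow> bool list \<times> bool option list"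
  assumes F_len: "\<And>n x k. length x = n \<Longrightarrow> length k = m n \<Longrightarrow> length (F n x k) = n"
    and q_poly: "\<exists>Q :: real poly. \<forall>n. q n = poly Q (real n)"
    and q_pos: "\<And>n. q n > 0"
    and \<sigma>_pos: "0 < \<sigma>" and \<sigma>_lt1: "\<sigma> < 1"
    and sel: "\<And>n t C. C \<noteq> {} \<Longrightarrow> sel n t C \<in> C"
  shows "negligible (\<lambda>n. measure_pmf.prob
            (Pi_pmf ({..<n} \<times> {..<nruns (q n) \<sigma> n}) []
               (\<lambda>(j, t). BV (n + m n) (comp n (F n) j)))
            {\<omega>. \<exists>a b. alg2 n \<sigma> sel (Hset n (nruns (q n) \<sigma> n) \<omega>) = Some (a, b)
                     \<and> \<not> good_td n (m n) (F n) (q n) \<sigma> a b})"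
  unfolding negligible_def
proof
  fix c :: nat
  define f where "f n = measure_pmf.prob
            (Pi_pmf ({..<n} \<times> {..<nruns (q n) \<sigma> n}) []
               (\<lambda>(j, t). BV (n + m n) (comp n (F n) j)))
            {\<omega>. \<exists>a b. alg2 n \<sigma> sel (Hset n (nruns (q n) \<sigma> n) \<omega>) = Some (a, b)
                     \<and> \<not> good_td n (m n) (F n) (q n) \<sigma> a b}" for n
  define g where "g n = 2 * real n * 2 ^ n * exp (- (real n)\<^sup>2 / 2)" for n :: nat
  have lim: "((\<lambda>n. g n * real n ^ c) \<longlongrightarrow> 0) sequentially"
    unfolding g_def by real_asymp
  have ev1: "\<forall>\<^sub>F n in sequentially. g n * real n ^ c < 1"
    using order_tendstoD(2)[OF lim] by simp
  have ev2: "\<forall>\<^sub>F n in sequentially. n > 0" by (rule eventually_gt_at_top)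
  have "\<forall>\<^sub>F n in sequentially. \<bar>f n\<bar> < 1 / real n ^ c"
    using ev1 ev2
  proof (rule eventually_mono[OF eventually_conj])
    fix n :: nat assume h: "g n * real n ^ c < 1 \<and> n > 0"
    have fb: "f n \<le> g n" unfolding f_def g_def
      by (rule main_bound[OF F_len q_pos \<sigma>_pos \<sigma>_lt1 sel]) (use h in auto)
    have f0: "0 \<le> f n" by (simp add: f_def)
    have pc: "real n ^ c > 0" using h by simp
    have "g n < 1 / real n ^ c" using h pc by (simp add: field_simps)
    then show "\<bar>f n\<bar> < 1 / real n ^ c" using fb f0 by simp
  qed
  then show "\<forall>\<^sub>F n in sequentially. \<bar>measure_pmf.prob
            (Pi_pmf ({..<n} \<times> {..<nruns (q n) \<sigma> n}) []
               (\<lambda>(j, t). BV (n + m n) (comp n (F n) j)))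
            {\<omega>. \<exists>a b. alg2 n \<sigma> sel (Hset n (nruns (q n) \<sigma> n) \<omega>) = Some (a, b)
                     \<and> \<not> good_td n (m n) (F n) (q n) \<sigma> a b}\<bar> < 1 / real n ^ c"
    unfolding f_def .
qed


end
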